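(* Let $V\subseteq R_d$ be a Gotzmann monomial vector space with $x_i$-decomposition $V=V_0\oplus x_iV_1$, and let $L=L_0\oplus x_iL_1$ be its $x_i$-compression. Then either $V_1$ is Gotzmann in $Q=R/(x_i)$, or $\mathbf n_1L_1\subseteq L_0$.
   Context: Let $\Bbbk$ be a field, $R=\Bbbk[x_1,\dots,x_n]/(x_1^2,\dots,x_n^2)$, $R_d$ its degree-$d$ component. A monomial vector space is a subspace of some $R_d$ spanned by monomials; $\mathbf m_1V$ is the span of $\{x_jm\}$ over monomials $m\in V$ and all $j$. A subspace $V\subseteq R_d$ is Gotzmann if $|\mathbf m_1V|\le|\mathbf m_1W|$ for every subspace $W\subseteq R_d$ with $|W|=|V|$ ($|\cdot|$ = dimension). Fix $x_i$, let $Q=R/(x_i)$, the squarefree ring in the other variables, with $\mathbf n_1W$ the span of $\{x_jm: j\neq i, m\in W \text{ monomial}\}$ and Gotzmann defined analogously in $Q$. A lex segment of $Q_e$ is a space spanned by an initial segment of the squarefree degree-$e$ monomials of $Q$ in lexicographic order (variables ordered $x_1>\dots>x_n$, omitting $x_i$). The $x_i$-decomposition of $V$ is $V=V_0\oplus x_iV_1$, with $V_0\subseteq Q_d$ spanned by the monomials of $V$ not divisible by $x_i$ and $V_1\subseteq Q_{d-1}$ spanned by the monomials $m$ with $x_im\in V$. The $x_i$-compression of $V$ is $L=L_0\oplus x_iL_1$, where $L_0\subseteq Q_d$ and $L_1\subseteq Q_{d-1}$ are the lex segments with $|L_0|=|V_0|$ and $|L_1|=|V_1|$. *)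

theory Defs
  imports Complex_Main "HOL-Library.Function_Algebras"
begin

text \<open>The squarefree ring R = k[x_1..x_n]/(x_1^2..x_n^2) is modelled as the k-vector space of
  functions from finite sets of variable indices (squarefree monomials, S standing for
  the product of x_j, j in S) to the field k.  A ring in a set X of variables
  (X = {1..n} for R, X = {1..n} - {i} for Q = R/(x_i)) is identified with the span of the
  monomials S contained in X.\<close>

definition scaleF :: "'k::field \<Rightarrow> (nat set \<Rightarrow> 'k) \<Rightarrow> (nat set \<Rightarrow> 'k)" where
  "scaleF c f = (\<lambda>S. c * f S)"

lemma vector_space_scaleF: "vector_space (scaleF :: 'k::field \<Rightarrow> _)"
  by unfold_locales (auto simp: scaleF_def algebra_simps)

abbreviation spanF :: "(nat set \<Rightarrow> 'k::field) set \<Rightarrow> (nat set \<Rightarrow> 'k) set" where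
  "spanF \<equiv> module.span scaleF"

abbreviation subspaceF :: "(nat set \<Rightarrow> 'k::field) set \<Rightarrow> bool" where
  "subspaceF \<equiv> module.subspace scaleF"

abbreviation dimF :: "(nat set \<Rightarrow> 'k::field) set \<Rightarrow> nat" where
  "dimF \<equiv> vector_space.dim scaleF"

definition mons :: "nat set \<Rightarrow> nat \<Rightarrow> nat set set" where
  "mons X d = {S. S \<subseteq> X \<and> card S = d}"

definition mon :: "nat set \<Rightarrow> (nat set \<Rightarrow> 'k::field)" where
  "mon S = (\<lambda>T. if T = S then 1 else 0)"

definition comp :: "nat set \<Rightarrow> nat \<Rightarrow> (nat set \<Rightarrow> 'k::field) set" where
  "comp X d = {f. \<forall>S. f S \<noteq> 0 \<longrightarrow> S \<in> mons X d}"

definition xmul :: "nat \<Rightarrow> (nat set \<Rightarrow> 'k::field) \<Rightarrow> (nat set \<Rightarrow> 'k)" where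
  "xmul j f = (\<lambda>T. if j \<in> T then f (T - {j}) else 0)"

text \<open>m_1 W (resp. n_1 W): span of all x_j w, j in X, w in W.\<close>
definition mult1 :: "nat set \<Rightarrow> (nat set \<Rightarrow> 'k::field) set \<Rightarrow> (nat set \<Rightarrow> 'k) set" where
  "mult1 X W = spanF {xmul j w | j w. j \<in> X \<and> w \<in> W}"

definition gotzmann :: "nat set \<Rightarrow> nat \<Rightarrow> (nat set \<Rightarrow> 'k::field) set \<Rightarrow> bool" where
  "gotzmann X d V \<longleftrightarrow> subspaceF V \<and> V \<subseteq> comp X d \<and>
     (\<forall>W :: (nat set \<Rightarrow> 'k) set. subspaceF W \<and> W \<subseteq> comp X d \<and> dimF W = dimF V \<longrightarrow>
          dimF (mult1 X V) \<le> dimF (mult1 X W))"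

text \<open>Lexicographic order with x_1 > x_2 > ... : for distinct squarefree monomials of the same
  degree, S >lex T iff the smallest variable index where they differ occurs in S.\<close>
definition lex_gt :: "nat set \<Rightarrow> nat set \<Rightarrow> bool" where
  "lex_gt S T \<longleftrightarrow> S \<noteq> T \<and> Min ((S - T) \<union> (T - S)) \<in> S"

definition lexseg :: "nat set \<Rightarrow> nat \<Rightarrow> nat \<Rightarrow> nat set set" where
  "lexseg X e k = {S \<in> mons X e. card {T \<in> mons X e. lex_gt T S} < k}"

end

theory Submission
  imports Defs
begin


lemma lex_irrefl: "\<not> lex_gt S S" by (simp add: lex_gt_def)

lemma lex_total: "finite S \<Longrightarrow> finite T \<Longrightarrow> S \<noteq> T \<Longrightarrow> lex_gt S T \<or> lex_gt T S"
proof -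
  assume f: "finite S" "finite T" and ne: "S \<noteq> T"
  have "(S - T) \<union> (T - S) \<noteq> {}" using ne by auto
  then have "Min ((S - T) \<union> (T - S)) \<in> (S - T) \<union> (T - S)" using f by (intro Min_in) auto
  moreover have "(T - S) \<union> (S - T) = (S - T) \<union> (T - S)" by auto
  ultimately show ?thesis using ne unfolding lex_gt_def by auto
qed

lemma lex_asym: "finite S \<Longrightarrow> finite T \<Longrightarrow> lex_gt S T \<Longrightarrow> \<not> lex_gt T S"
proof
  assume f: "finite S" "finite T" and a: "lex_gt S T" "lex_gt T S"
  have e: "(T - S) \<union> (S - T) = (S - T) \<union> (T - S)" by auto
  have "S \<noteq> T" using a by (simp add: lex_gt_def)
  then have ne: "(S - T) \<union> (T - S) \<noteq> {}" by auto
  let ?m = "Min ((S - T) \<union> (T - S))"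
  have "?m \<in> S" "?m \<in> T" using a e unfolding lex_gt_def by auto
  moreover have "?m \<in> (S - T) \<union> (T - S)"
    using ne f by (intro Min_in) auto
  ultimately show False by blast
qed

lemma Min_symdiff:
  assumes "finite S" "finite T" "S \<noteq> T"
  defines "m \<equiv> Min ((S - T) \<union> (T - S))"
  shows "m \<in> (S - T) \<union> (T - S)" "\<And>x. x < m \<Longrightarrow> x \<in> S \<longleftrightarrow> x \<in> T"
proof -
  have ne: "(S - T) \<union> (T - S) \<noteq> {}" using assms by auto
  show "m \<in> (S - T) \<union> (T - S)" unfolding m_def using assms ne by (intro Min_in) auto
  fix x assume "x < m"
  show "x \<in> S \<longleftrightarrow> x \<in> T"
  proof (rule ccontr)
    assume "\<not> ?thesis"
    then have "x \<in> (S - T) \<union> (T - S)" by auto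
    then have "m \<le> x" unfolding m_def using assms by (intro Min_le) auto
    with \<open>x < m\<close> show False by simp
  qed
qed

lemma lex_gt_iff:
  assumes "finite S" "finite T"
  shows "lex_gt S T \<longleftrightarrow> (\<exists>m. m \<in> S \<and> m \<notin> T \<and> (\<forall>x<m. x \<in> S \<longleftrightarrow> x \<in> T))"
proof
  assume "lex_gt S T"
  then have ne: "S \<noteq> T" and mi: "Min ((S - T) \<union> (T - S)) \<in> S" by (auto simp: lex_gt_def)
  show "\<exists>m. m \<in> S \<and> m \<notin> T \<and> (\<forall>x<m. x \<in> S \<longleftrightarrow> x \<in> T)"
    using Min_symdiff[OF assms ne] mi by blast
next
  assume "\<exists>m. m \<in> S \<and> m \<notin> T \<and> (\<forall>x<m. x \<in> S \<longleftrightarrow> x \<in> T)"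
  then obtain m where m: "m \<in> S" "m \<notin> T" "\<forall>x<m. x \<in> S \<longleftrightarrow> x \<in> T" by blast
  have ne: "S \<noteq> T" using m by auto
  define k where "k = Min ((S - T) \<union> (T - S))"
  have k: "k \<in> (S - T) \<union> (T - S)" "\<And>x. x < k \<Longrightarrow> x \<in> S \<longleftrightarrow> x \<in> T"
    using Min_symdiff[OF assms ne] unfolding k_def by auto
  have "k = m"
  proof (rule ccontr)
    assume "k \<noteq> m"
    then have "k < m \<or> m < k" by auto
    then show False using k m by auto
  qed
  then show "lex_gt S T" using ne m unfolding lex_gt_def k_def by simp
qed

lemma lex_trans:
  assumes "finite S" "finite T" "finite R" "lex_gt S T" "lex_gt T R"
  shows "lex_gt S R"
proof -
  obtain a where a: "a \<in> S" "a \<notin> T" "\<forall>x<a. x \<in> S \<longleftrightarrow> x \<in> T"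
    using assms lex_gt_iff by blast
  obtain b where b: "b \<in> T" "b \<notin> R" "\<forall>x<b. x \<in> T \<longleftrightarrow> x \<in> R"
    using assms lex_gt_iff by blast
  have "a \<noteq> b" using a b by auto
  then have "a < b \<or> b < a" by auto
  then show ?thesis
  proof
    assume "a < b"
    then have "a \<in> S \<and> a \<notin> R \<and> (\<forall>x<a. x \<in> S \<longleftrightarrow> x \<in> R)" using a b by auto
    then show ?thesis using lex_gt_iff assms by blast
  next
    assume "b < a"
    then have "b \<in> S \<and> b \<notin> R \<and> (\<forall>x<b. x \<in> S \<longleftrightarrow> x \<in> R)" using a b by auto
    then show ?thesis using lex_gt_iff assms by blast
  qed
qed

lemma lex_max_exists:
  assumes "finite A" "A \<noteq> {}" "\<forall>S\<in>A. finite S"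
  shows "\<exists>S\<in>A. \<forall>T\<in>A. T \<noteq> S \<longrightarrow> lex_gt S T"
  using assms
proof (induction A rule: finite_ne_induct)
  case (singleton x) then show ?case by auto
next
  case (insert x F)
  then obtain S where S: "S \<in> F" "\<forall>T\<in>F. T \<noteq> S \<longrightarrow> lex_gt S T" by auto
  show ?case
  proof (cases "lex_gt x S")
    case True
    have "\<forall>T\<in>insert x F. T \<noteq> x \<longrightarrow> lex_gt x T"
      using S True insert.prems insert.hyps lex_trans by (metis insert_iff)
    then show ?thesis by auto
  next
    case False
    then have "x = S \<or> lex_gt S x" using lex_total insert.prems S(1) by auto
    then have "\<forall>T\<in>insert x F. T \<noteq> S \<longrightarrow> lex_gt S T" using S by auto
    then show ?thesis using S by auto
  qed
qed



definition up :: "nat set \<Rightarrow> nat set set \<Rightarrow> nat set set" where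
  "up X F = {insert j S | S j. S \<in> F \<and> j \<in> X \<and> j \<notin> S}"

definition upcl :: "nat set \<Rightarrow> nat \<Rightarrow> nat set set \<Rightarrow> bool" where
  "upcl X e G \<longleftrightarrow> G \<subseteq> mons X e \<and> (\<forall>S\<in>G. \<forall>T\<in>mons X e. lex_gt T S \<longrightarrow> T \<in> G)"

definition rank :: "nat set \<Rightarrow> nat \<Rightarrow> nat set \<Rightarrow> nat" where
  "rank X e S = card {T \<in> mons X e. lex_gt T S}"

lemma finite_mons: "finite X \<Longrightarrow> finite (mons X e)"
  unfolding mons_def by (rule finite_subset[of _ "Pow X"]) auto

lemma mons_finite: "finite X \<Longrightarrow> S \<in> mons X e \<Longrightarrow> finite S"
  unfolding mons_def using finite_subset by auto

lemma lexseg_sub: "lexseg X e k \<subseteq> mons X e"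
  unfolding lexseg_def by auto

lemma lexseg_mono: "k \<le> k' \<Longrightarrow> lexseg X e k \<subseteq> lexseg X e k'"
  unfolding lexseg_def by auto

lemma rank_mono:
  assumes "finite X" "S \<in> mons X e" "T \<in> mons X e" "lex_gt T S"
  shows "rank X e T < rank X e S"
proof -
  have "{R \<in> mons X e. lex_gt R T} \<subset> {R \<in> mons X e. lex_gt R S}"
  proof
    show "{R \<in> mons X e. lex_gt R T} \<subseteq> {R \<in> mons X e. lex_gt R S}"
    proof
      fix R assume R: "R \<in> {R \<in> mons X e. lex_gt R T}"
      then have "lex_gt R S" using lex_trans[of R T S] assms mons_finite by blast
      then show "R \<in> {R \<in> mons X e. lex_gt R S}" using R by blast
    qed
    show "{R \<in> mons X e. lex_gt R T} \<noteq> {R \<in> mons X e. lex_gt R S}"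
      using assms lex_irrefl by (metis (mono_tags, lifting) mem_Collect_eq)
  qed
  then show ?thesis unfolding rank_def
    by (intro psubset_card_mono) (auto intro: finite_subset[OF _ finite_mons[OF assms(1)]])
qed

lemma lexseg_upcl: "finite X \<Longrightarrow> upcl X e (lexseg X e k)"
  unfolding upcl_def
proof (intro conjI ballI impI)
  assume f: "finite X"
  show "lexseg X e k \<subseteq> mons X e" by (rule lexseg_sub)
  fix S T assume S: "S \<in> lexseg X e k" and T: "T \<in> mons X e" and g: "lex_gt T S"
  have "rank X e T < rank X e S" using rank_mono[OF f _ T g] S lexseg_sub by auto
  then show "T \<in> lexseg X e k" using S T unfolding lexseg_def rank_def by auto
qed

lemma upcl_eq_lexseg:
  assumes f: "finite X" and u: "upcl X e G"
  shows "G = lexseg X e (card G)"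
proof -
  have G: "G \<subseteq> mons X e" using u upcl_def by auto
  have fG: "finite G" using G finite_mons[OF f] finite_subset by auto
  show ?thesis
  proof
    show "G \<subseteq> lexseg X e (card G)"
    proof
      fix S assume S: "S \<in> G"
      have "{T \<in> mons X e. lex_gt T S} \<subseteq> G - {S}" using u S lex_irrefl unfolding upcl_def by auto
      then have "card {T \<in> mons X e. lex_gt T S} \<le> card (G - {S})" using fG by (intro card_mono) auto
      also have "\<dots> < card G" using S fG by (metis card_Diff1_less)
      finally show "S \<in> lexseg X e (card G)" using S G unfolding lexseg_def by auto
    qed
    show "lexseg X e (card G) \<subseteq> G"
    proof
      fix S assume S: "S \<in> lexseg X e (card G)"
      show "S \<in> G"
      proof (rule ccontr)
        assume nS: "S \<notin> G"
        have Sm: "S \<in> mons X e" using S lexseg_sub by auto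
        have "G \<subseteq> {T \<in> mons X e. lex_gt T S}"
        proof
          fix T assume T: "T \<in> G"
          then have "T \<noteq> S" using nS by auto
          have "T \<in> mons X e" using T G by blast
          then have "lex_gt T S \<or> lex_gt S T" using lex_total[OF mons_finite[OF f _] mons_finite[OF f Sm]] \<open>T \<noteq> S\<close> by blast
          then show "T \<in> {T \<in> mons X e. lex_gt T S}"
            using u T Sm G nS unfolding upcl_def by blast
        qed
        then have "card G \<le> card {T \<in> mons X e. lex_gt T S}"
          by (intro card_mono) (auto intro: finite_subset[OF _ finite_mons[OF f]])
        then show False using S unfolding lexseg_def by auto
      qed
    qed
  qed
qed

lemma card_lexseg:
  assumes f: "finite X" and k: "k \<le> card (mons X e)"
  shows "card (lexseg X e k) = k"
proof -
  let ?M = "mons X e"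
  have fM: "finite ?M" using finite_mons[OF f] .
  have inj: "inj_on (rank X e) ?M"
  proof (rule inj_onI)
    fix S T assume S: "S \<in> ?M" and T: "T \<in> ?M" and eq: "rank X e S = rank X e T"
    show "S = T"
    proof (rule ccontr)
      assume "S \<noteq> T"
      then have "lex_gt S T \<or> lex_gt T S" using lex_total[OF mons_finite[OF f S] mons_finite[OF f T]] by blast
      then show False using rank_mono[OF f S T] rank_mono[OF f T S] eq by auto
    qed
  qed
  have lt: "rank X e S < card ?M" if S: "S \<in> ?M" for S
  proof -
    have "{T \<in> ?M. lex_gt T S} \<subseteq> ?M - {S}" using lex_irrefl by auto
    then have "rank X e S \<le> card (?M - {S})" unfolding rank_def using fM by (intro card_mono) auto
    also have "\<dots> < card ?M" using S fM by (metis card_Diff1_less)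
    finally show ?thesis .
  qed
  have im: "rank X e ` ?M = {..<card ?M}"
  proof -
    have "rank X e ` ?M \<subseteq> {..<card ?M}" using lt by auto
    moreover have "card (rank X e ` ?M) = card {..<card ?M}" using card_image[OF inj] by simp
    ultimately show ?thesis by (intro card_subset_eq) auto
  qed
  have ls: "lexseg X e k = {S \<in> ?M. rank X e S < k}" unfolding lexseg_def rank_def by simp
  have "rank X e ` {S \<in> ?M. rank X e S < k} = {..<k}"
  proof
    show "rank X e ` {S \<in> ?M. rank X e S < k} \<subseteq> {..<k}" by auto
    show "{..<k} \<subseteq> rank X e ` {S \<in> ?M. rank X e S < k}"
    proof
      fix x assume "x \<in> {..<k}"
      then have "x \<in> rank X e ` ?M" using im k by auto
      then obtain S where "S \<in> ?M" "x = rank X e S" by auto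
      then show "x \<in> rank X e ` {S \<in> ?M. rank X e S < k}" using \<open>x \<in> {..<k}\<close> by auto
    qed
  qed
  moreover have "inj_on (rank X e) {S \<in> ?M. rank X e S < k}" using inj by (rule inj_on_subset) auto
  ultimately have "card {S \<in> ?M. rank X e S < k} = card {..<k}" by (metis card_image)
  then show ?thesis unfolding ls by simp
qed

lemma upcl_comparable:
  assumes f: "finite X" and A: "upcl X e A" and B: "upcl X e B"
  shows "A \<subseteq> B \<or> B \<subseteq> A"
proof (rule ccontr)
  assume "\<not> ?thesis"
  then obtain a b where a: "a \<in> A" "a \<notin> B" and b: "b \<in> B" "b \<notin> A" by auto
  have am: "a \<in> mons X e" and bm: "b \<in> mons X e" using a b A B upcl_def by auto
  have "a \<noteq> b" using a b by auto
  then have "lex_gt a b \<or> lex_gt b a" using lex_total[OF mons_finite[OF f am] mons_finite[OF f bm]] by blast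
  then show False
  proof
    assume "lex_gt a b" then have "a \<in> B" using B b am unfolding upcl_def by blast
    then show False using a by blast
  next
    assume "lex_gt b a" then have "b \<in> A" using A a bm unfolding upcl_def by blast
    then show False using b by blast
  qed
qed

lemma up_mons: "F \<subseteq> mons X e \<Longrightarrow> finite X \<Longrightarrow> up X F \<subseteq> mons X (Suc e)"
proof
  fix T assume F: "F \<subseteq> mons X e" and f: "finite X" and T: "T \<in> up X F"
  then obtain S j where "T = insert j S" "S \<in> F" "j \<in> X" "j \<notin> S" unfolding up_def by blast
  moreover have "S \<subseteq> X" "card S = e" using F \<open>S \<in> F\<close> unfolding mons_def by auto
  moreover have "finite S" using \<open>S \<subseteq> X\<close> f finite_subset by blast
  ultimately show "T \<in> mons X (Suc e)" unfolding mons_def by simp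
qed

lemma finite_up: "F \<subseteq> mons X e \<Longrightarrow> finite X \<Longrightarrow> finite (up X F)"
  by (rule finite_subset[OF up_mons finite_mons])

lemma up_mono: "F \<subseteq> G \<Longrightarrow> up X F \<subseteq> up X G"
  unfolding up_def by blast



lemma up_upcl:
  assumes f: "finite X" and L: "upcl X e L"
  shows "upcl X (Suc e) (up X L)"
  unfolding upcl_def
proof (intro conjI ballI impI)
  have Lm: "L \<subseteq> mons X e" using L upcl_def by blast
  show "up X L \<subseteq> mons X (Suc e)" using up_mons[OF Lm f] .
  fix T T' assume T: "T \<in> up X L" and T': "T' \<in> mons X (Suc e)" and g: "lex_gt T' T"
  obtain S j where Tj: "T = insert j S" and S: "S \<in> L" and j: "j \<in> X" "j \<notin> S"
    using T unfolding up_def by blast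
  have Sm: "S \<in> mons X e" using S Lm by blast
  have fS: "finite S" using mons_finite[OF f Sm] .
  have fT: "finite T" using Tj fS by simp
  have fT': "finite T'" using mons_finite[OF f T'] .
  have T'X: "T' \<subseteq> X" and cT': "card T' = Suc e" using T' unfolding mons_def by auto
  have SX: "S \<subseteq> X" and cS: "card S = e" using Sm unfolding mons_def by auto
  obtain m where m: "m \<in> T'" "m \<notin> T" "\<forall>x<m. x \<in> T' \<longleftrightarrow> x \<in> T"
    using g lex_gt_iff[OF fT' fT] by blast
  have STj: "S = T - {j}" using Tj j by auto
  have jm: "j \<noteq> m" using m Tj by auto
  have key: "S' \<in> L" if S'm: "S' \<in> mons X e" and gt: "m \<in> S'" "\<forall>x<m. x \<in> S' \<longleftrightarrow> x \<in> S" for S'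
  proof -
    have "m \<notin> S" using m Tj by auto
    then have "lex_gt S' S" using lex_gt_iff[OF mons_finite[OF f S'm] fS] gt by blast
    then show ?thesis using L S S'm unfolding upcl_def by blast
  qed
  show "T' \<in> up X L"
  proof (cases "j < m")
    case True
    then have jT': "j \<in> T'" using m Tj by auto
    let ?S' = "T' - {j}"
    have S'm: "?S' \<in> mons X e" using T'X cT' jT' fT' unfolding mons_def by auto
    have "?S' \<in> L" using key[OF S'm] m True STj jm by auto
    moreover have "T' = insert j ?S'" using jT' by auto
    ultimately show ?thesis unfolding up_def using j by blast
  next
    case False
    then have mj: "m < j" using jm by auto
    show ?thesis
    proof (cases "\<exists>k\<in>T'. m < k")
      case True
      then obtain k where k: "k \<in> T'" "m < k" by blast
      let ?S' = "T' - {k}"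
      have S'm: "?S' \<in> mons X e" using T'X cT' k fT' unfolding mons_def by auto
      have "\<forall>x<m. x \<in> ?S' \<longleftrightarrow> x \<in> S" using m k mj STj by auto
      moreover have "m \<in> ?S'" using m k by auto
      ultimately have "?S' \<in> L" using key[OF S'm] by blast
      moreover have "T' = insert k ?S'" using k by auto
      ultimately show ?thesis unfolding up_def using k T'X by blast
    next
      case False
      define c where "c = {x \<in> T'. x < m}"
      have T'c: "T' = insert m c" using False m unfolding c_def by force
      have mc: "m \<notin> c" unfolding c_def by auto
      have fc: "finite c" using fT' unfolding c_def by auto
      have cc: "card c = e" using cT' T'c mc fc by simp
      have cT: "c \<subseteq> T" using m unfolding c_def by auto
      have jc: "j \<notin> c" using mj unfolding c_def by auto
      have "insert j c \<subseteq> T" using cT Tj by auto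
      moreover have "card (insert j c) = card T" using cc jc fc Tj j fS cS by simp
      ultimately have "insert j c = T" using fT by (intro card_subset_eq) auto
      then have "S = c" using STj jc by auto
      then have "T' = insert m S" using T'c by simp
      moreover have "m \<notin> S" using m Tj by auto
      moreover have "m \<in> X" using m T'X by auto
      ultimately show ?thesis unfolding up_def using S by blast
    qed
  qed
qed



definition mv :: "nat set \<Rightarrow> nat set \<Rightarrow> nat set \<Rightarrow> nat set" where
  "mv U V A = (A - V) \<union> U"

definition movable :: "nat set \<Rightarrow> nat set \<Rightarrow> nat set set \<Rightarrow> nat set \<Rightarrow> bool" where
  "movable U V F A \<longleftrightarrow> V \<subseteq> A \<and> U \<inter> A = {} \<and> mv U V A \<notin> F"

definition cmp :: "nat set \<Rightarrow> nat set \<Rightarrow> nat set set \<Rightarrow> nat set set" where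
  "cmp U V F = (\<lambda>A. if movable U V F A then mv U V A else A) ` F"

definition compressed :: "nat set \<Rightarrow> nat set \<Rightarrow> nat set set \<Rightarrow> bool" where
  "compressed U V F \<longleftrightarrow> (\<forall>A\<in>F. V \<subseteq> A \<and> U \<inter> A = {} \<longrightarrow> mv U V A \<in> F)"

lemma mem_cmp:
  assumes UV: "U \<inter> V = {}"
  shows "B \<in> cmp U V H \<longleftrightarrow> (B \<in> H \<and> \<not> movable U V H B) \<or>
           (B \<notin> H \<and> U \<subseteq> B \<and> V \<inter> B = {} \<and> (B - U) \<union> V \<in> H)"
proof
  assume "B \<in> cmp U V H"
  then obtain A where A: "A \<in> H" and B: "B = (if movable U V H A then mv U V A else A)"
    unfolding cmp_def by blast
  show "(B \<in> H \<and> \<not> movable U V H B) \<or> (B \<notin> H \<and> U \<subseteq> B \<and> V \<inter> B = {} \<and> (B - U) \<union> V \<in> H)"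
  proof (cases "movable U V H A")
    case True
    then have "B = (A - V) \<union> U" "V \<subseteq> A" "U \<inter> A = {}" "B \<notin> H" using B unfolding movable_def mv_def by auto
    moreover have "(B - U) \<union> V = A" using calculation UV by auto
    ultimately show ?thesis using A UV by auto
  next
    case False then show ?thesis using A B by auto
  qed
next
  assume h: "(B \<in> H \<and> \<not> movable U V H B) \<or> (B \<notin> H \<and> U \<subseteq> B \<and> V \<inter> B = {} \<and> (B - U) \<union> V \<in> H)"
  show "B \<in> cmp U V H"
  proof (cases "B \<in> H \<and> \<not> movable U V H B")
    case True then show ?thesis unfolding cmp_def by force
  next
    case False
    then have h2: "B \<notin> H" "U \<subseteq> B" "V \<inter> B = {}" "(B - U) \<union> V \<in> H" using h by auto
    let ?A = "(B - U) \<union> V"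
    have "mv U V ?A = B" using h2 UV unfolding mv_def by auto
    moreover have "movable U V H ?A" using h2 UV \<open>mv U V ?A = B\<close> unfolding movable_def by auto
    ultimately have "B = (if movable U V H ?A then mv U V ?A else ?A)" by simp
    then show ?thesis unfolding cmp_def using h2(4) by (rule image_eqI)
  qed
qed

lemma inj_cmp:
  assumes UV: "U \<inter> V = {}"
  shows "inj_on (\<lambda>A. if movable U V F A then mv U V A else A) F"
proof (rule inj_onI)
  fix A A' assume A: "A \<in> F" and A': "A' \<in> F"
    and eq: "(if movable U V F A then mv U V A else A) = (if movable U V F A' then mv U V A' else A')"
  have bk: "(mv U V A - U) \<union> V = A" if "movable U V F A" for A
    using that UV unfolding movable_def mv_def by auto
  show "A = A'"
  proof (cases "movable U V F A"; cases "movable U V F A'")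
    assume "movable U V F A" "movable U V F A'"
    then show ?thesis using eq bk by metis
  next
    assume a: "movable U V F A" "\<not> movable U V F A'"
    then have "mv U V A = A'" using eq by simp
    then show ?thesis using a(1) A' unfolding movable_def by simp
  next
    assume a: "\<not> movable U V F A" "movable U V F A'"
    then have "mv U V A' = A" using eq by simp
    then show ?thesis using a(2) A unfolding movable_def by simp
  next
    assume "\<not> movable U V F A" "\<not> movable U V F A'"
    then show ?thesis using eq by auto
  qed
qed

lemma card_cmp: "U \<inter> V = {} \<Longrightarrow> card (cmp U V F) = card F"
  unfolding cmp_def by (rule card_image[OF inj_cmp])

lemma up_cmp:
  assumes UV: "U \<inter> V = {}" and Une: "U \<noteq> {}" and UX: "U \<subseteq> X"
    and hyp: "\<forall>v\<in>V. \<exists>u\<in>U. compressed (U - {u}) (V - {v}) F"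
  shows "up X (cmp U V F) \<subseteq> cmp U V (up X F)"
proof
  fix B assume "B \<in> up X (cmp U V F)"
  then obtain A' x where B: "B = insert x A'" and A': "A' \<in> cmp U V F" and x: "x \<in> X" "x \<notin> A'"
    unfolding up_def by blast
  have A'c: "(A' \<in> F \<and> \<not> movable U V F A') \<or> (A' \<notin> F \<and> U \<subseteq> A' \<and> V \<inter> A' = {} \<and> (A' - U) \<union> V \<in> F)"
    using A' mem_cmp[OF UV] by blast
  show "B \<in> cmp U V (up X F)"
  proof (cases "A' \<in> F \<and> \<not> movable U V F A'")
    case True
    have BF: "B \<in> up X F" using True B x unfolding up_def by blast
    have "\<not> movable U V (up X F) B"
    proof
      assume mvB: "movable U V (up X F) B"
      then have VB: "V \<subseteq> B" and UB: "U \<inter> B = {}" and nB: "mv U V B \<notin> up X F"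
        unfolding movable_def by auto
      show False
      proof (cases "x \<in> V")
        case False
        then have "V \<subseteq> A'" "U \<inter> A' = {}" using VB UB B by auto
        then have "mv U V A' \<in> F" using True unfolding movable_def by auto
        moreover have "mv U V B = insert x (mv U V A')" using B False unfolding mv_def by auto
        moreover have "x \<notin> mv U V A'" using x UB B unfolding mv_def by auto
        ultimately have "mv U V B \<in> up X F" using x unfolding up_def by blast
        then show False using nB by simp
      next
        case True
        then obtain u where u: "u \<in> U" and cu: "compressed (U - {u}) (V - {x}) F" using hyp by blast
        have "V - {x} \<subseteq> A'" "(U - {u}) \<inter> A' = {}" using VB UB B by auto
        then have m': "mv (U - {u}) (V - {x}) A' \<in> F" using cu \<open>A' \<in> F \<and> \<not> movable U V F A'\<close>
          unfolding compressed_def by blast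
        have "mv U V B = insert u (mv (U - {u}) (V - {x}) A')" using B True x u unfolding mv_def by auto
        moreover have "u \<notin> mv (U - {u}) (V - {x}) A'" using UB B u unfolding mv_def by auto
        moreover have "u \<in> X" using u UX by auto
        ultimately have "mv U V B \<in> up X F" using m' unfolding up_def by blast
        then show False using nB by simp
      qed
    qed
    then show ?thesis using BF mem_cmp[OF UV] by blast
  next
    case False
    then have h: "A' \<notin> F" "U \<subseteq> A'" "V \<inter> A' = {}" "(A' - U) \<union> V \<in> F" using A'c by auto
    define A where "A = (A' - U) \<union> V"
    have AF: "A \<in> F" using h A_def by simp
    show ?thesis
    proof (cases "B \<in> up X F")
      case True
      have "\<not> movable U V (up X F) B" using h Une B unfolding movable_def by auto
      then show ?thesis using True mem_cmp[OF UV] by blast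
    next
      case nBF: False
      show ?thesis
      proof (cases "x \<in> V")
        case True
        then obtain u where u: "u \<in> U" and cu: "compressed (U - {u}) (V - {x}) F" using hyp by blast
        have "V - {x} \<subseteq> A" "(U - {u}) \<inter> A = {}" using A_def UV by auto
        then have m': "mv (U - {u}) (V - {x}) A \<in> F" using cu AF unfolding compressed_def by blast
        have ux: "u \<noteq> x" using u True UV by auto
        have "B = insert u (mv (U - {u}) (V - {x}) A)"
          using B True u h ux UV unfolding A_def mv_def by auto
        moreover have "u \<notin> mv (U - {u}) (V - {x}) A" using u UV unfolding A_def mv_def by auto
        moreover have "u \<in> X" using u UX by auto
        ultimately have "B \<in> up X F" using m' unfolding up_def by blast
        then show ?thesis using nBF by simp
      next
        case False
        have xU: "x \<notin> U" using h x by auto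
        have "(B - U) \<union> V = insert x A" using B xU unfolding A_def by auto
        moreover have "x \<notin> A" using x False unfolding A_def by auto
        ultimately have "(B - U) \<union> V \<in> up X F" using AF x unfolding up_def by blast
        moreover have "U \<subseteq> B" "V \<inter> B = {}" using h B False by auto
        ultimately show ?thesis using nBF mem_cmp[OF UV] by blast
      qed
    qed
  qed
qed



definition validp :: "nat set \<Rightarrow> nat set \<Rightarrow> nat set \<Rightarrow> bool" where
  "validp X U V \<longleftrightarrow> U \<subseteq> X \<and> V \<subseteq> X \<and> U \<inter> V = {} \<and> card U = card V \<and> U \<noteq> {} \<and> finite U
     \<and> finite V \<and> Min (U \<union> V) \<in> U"

definition weight :: "nat set \<Rightarrow> nat \<Rightarrow> nat set set \<Rightarrow> nat" where
  "weight X e G = (\<Sum>A\<in>G. rank X e A)"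

lemma mv_mons:
  assumes "A \<in> mons X e" "V \<subseteq> A" "U \<inter> A = {}" "validp X U V" "finite X"
  shows "mv U V A \<in> mons X e"
proof -
  have AX: "A \<subseteq> X" and cA: "card A = e" using assms(1) unfolding mons_def by auto
  have fA: "finite A" using AX assms(5) finite_subset by blast
  have v: "U \<subseteq> X" "card U = card V" "finite U" "finite V" using assms(4) unfolding validp_def by auto
  have "card (A - V) = card A - card V" using assms(2) fA by (simp add: card_Diff_subset finite_subset)
  moreover have "card ((A - V) \<union> U) = card (A - V) + card U" using assms(3) fA v by (intro card_Un_disjoint) auto
  moreover have "card V \<le> card A" using assms(2) fA by (simp add: card_mono)
  ultimately have "card ((A - V) \<union> U) = card A" using v by simp
  then show ?thesis using AX v cA unfolding mons_def mv_def by auto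
qed

lemma cmp_mons:
  assumes "G \<subseteq> mons X e" "validp X U V" "finite X"
  shows "cmp U V G \<subseteq> mons X e"
  using assms mv_mons unfolding cmp_def movable_def by auto

lemma mv_lex:
  assumes "finite A" "V \<subseteq> A" "U \<inter> A = {}" "validp X U V"
  shows "lex_gt (mv U V A) A"
proof -
  have v: "finite U" "finite V" "Min (U \<union> V) \<in> U" using assms(4) unfolding validp_def by auto
  let ?m = "Min (U \<union> V)"
  have "\<forall>x<?m. x \<notin> U \<union> V" using v by (meson Min_le finite_UnI leD)
  then have "\<forall>x<?m. x \<in> mv U V A \<longleftrightarrow> x \<in> A" unfolding mv_def by auto
  moreover have "?m \<in> mv U V A" "?m \<notin> A" using v assms(3) unfolding mv_def by auto
  ultimately show ?thesis using lex_gt_iff[of "mv U V A" A] assms v unfolding mv_def by blast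
qed

lemma weight_cmp:
  assumes f: "finite X" and G: "G \<subseteq> mons X e" and v: "validp X U V" and nc: "\<not> compressed U V G"
  shows "weight X e (cmp U V G) < weight X e G"
proof -
  have UV: "U \<inter> V = {}" using v validp_def by auto
  let ?c = "\<lambda>A. if movable U V G A then mv U V A else A"
  have fG: "finite G" using G finite_mons[OF f] finite_subset by auto
  have "weight X e (cmp U V G) = (\<Sum>A\<in>G. rank X e (?c A))"
    unfolding weight_def cmp_def by (rule sum.reindex_cong[OF inj_cmp[OF UV] refl refl])
  also have "\<dots> < (\<Sum>A\<in>G. rank X e A)"
  proof (rule sum_strict_mono_ex1[OF fG])
    have lt: "rank X e (mv U V A) < rank X e A" if A: "A \<in> G" "movable U V G A" for A
    proof -
      have Am: "A \<in> mons X e" using A G by auto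
      have m: "V \<subseteq> A" "U \<inter> A = {}" using A unfolding movable_def by auto
      show ?thesis using rank_mono[OF f Am mv_mons[OF Am m v f] mv_lex[OF mons_finite[OF f Am] m v]] .
    qed
    show "\<forall>A\<in>G. rank X e (?c A) \<le> rank X e A" using lt by (auto simp: less_imp_le)
    obtain A where "A \<in> G" "V \<subseteq> A" "U \<inter> A = {}" "mv U V A \<notin> G" using nc unfolding compressed_def by blast
    then have "A \<in> G" "movable U V G A" unfolding movable_def by auto
    then show "\<exists>A\<in>G. rank X e (?c A) < rank X e A" using lt by auto
  qed
  finally show ?thesis unfolding weight_def .
qed

theorem KK:
  assumes f: "finite X" and F: "F \<subseteq> mons X e"
  shows "card (up X (lexseg X e (card F))) \<le> card (up X F)"
proof -
  define P where "P G \<longleftrightarrow> G \<subseteq> mons X e \<and> card G = card F \<and> card (up X G) \<le> card (up X F)" for G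
  have "P F" unfolding P_def using F by simp
  then obtain G where PG: "P G" and minG: "\<And>H. P H \<Longrightarrow> weight X e G \<le> weight X e H"
    using ex_has_least_nat[of P F "weight X e"] by blast
  have Gm: "G \<subseteq> mons X e" using PG P_def by auto
  have allc: "\<forall>U V. card U = k \<longrightarrow> validp X U V \<longrightarrow> compressed U V G" for k
  proof (induction k rule: less_induct)
    case (less k)
    show ?case
    proof (intro allI impI)
      fix U V assume cU: "card U = k" and v: "validp X U V"
      have UV: "U \<inter> V = {}" and Une: "U \<noteq> {}" and UX: "U \<subseteq> X" and fU: "finite U" and fV: "finite V"
        and cUV: "card U = card V" and mU: "Min (U \<union> V) \<in> U" and VX: "V \<subseteq> X"
        using v unfolding validp_def by auto
      have hyp: "\<forall>v\<in>V. \<exists>u\<in>U. compressed (U - {u}) (V - {v}) G"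
      proof
        fix w assume w: "w \<in> V"
        show "\<exists>u\<in>U. compressed (U - {u}) (V - {w}) G"
        proof (cases "k = 1")
          case True
          then obtain u where "U = {u}" using cU card_1_singletonE by blast
          moreover have "V = {w}"
          proof -
            have "card V = 1" using cUV True cU by simp
            then obtain w' where "V = {w'}" by (rule card_1_singletonE)
            then show ?thesis using w by simp
          qed
          ultimately show ?thesis unfolding compressed_def mv_def by auto
        next
          case False
          have "k \<noteq> 0" using cU Une fU by auto
          then have k2: "2 \<le> k" using False by linarith
          let ?m = "Min (U \<union> V)"
          have "U - {?m} \<noteq> {}"
          proof
            assume "U - {?m} = {}"
            then have "U \<subseteq> {?m}" by auto
            then have "card U \<le> card {?m}" by (intro card_mono) auto
            then have "card U \<le> 1" by simp
            then show False using k2 cU by simp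
          qed
          then obtain u where u: "u \<in> U" "u \<noteq> ?m" by auto
          have v2: "validp X (U - {u}) (V - {w})"
          proof -
            have "?m \<in> (U - {u}) \<union> (V - {w})" using mU u by auto
            moreover have "\<forall>y\<in>(U - {u}) \<union> (V - {w}). ?m \<le> y" using fU fV by auto
            ultimately have "Min ((U - {u}) \<union> (V - {w})) = ?m" using fU fV by (intro Min_eqI) auto
            then show ?thesis unfolding validp_def using UV UX VX fU fV cUV u w mU by auto
          qed
          have lt: "card (U - {u}) < k" using card_Diff1_less[OF fU u(1)] cU by simp
          have "compressed (U - {u}) (V - {w}) G" using less.IH[OF lt] v2 by blast
          then show ?thesis using u(1) by blast
        qed
      qed
      show "compressed U V G"
      proof (rule ccontr)
        assume nc: "\<not> compressed U V G"
        have "card (up X (cmp U V G)) \<le> card (cmp U V (up X G))"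
        proof (rule card_mono)
          show "finite (cmp U V (up X G))" unfolding cmp_def using finite_up[OF Gm f] by (rule finite_imageI)
          show "up X (cmp U V G) \<subseteq> cmp U V (up X G)" by (rule up_cmp[OF UV Une UX hyp])
        qed
        also have "\<dots> = card (up X G)" by (rule card_cmp[OF UV])
        finally have "P (cmp U V G)" using PG cmp_mons[OF Gm v f] card_cmp[OF UV] unfolding P_def by auto
        then have "weight X e G \<le> weight X e (cmp U V G)" by (rule minG)
        then show False using weight_cmp[OF f Gm v nc] by simp
      qed
    qed
  qed
  have upG: "upcl X e G"
    unfolding upcl_def
  proof (intro conjI ballI impI)
    show "G \<subseteq> mons X e" by (rule Gm)
    fix S T assume S: "S \<in> G" and T: "T \<in> mons X e" and g: "lex_gt T S"
    show "T \<in> G"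
    proof (rule ccontr)
      assume nT: "T \<notin> G"
      have Sm: "S \<in> mons X e" using S Gm by auto
      have fS: "finite S" and fT: "finite T" using mons_finite[OF f] Sm T by auto
      have cS: "card S = e" and cT: "card T = e" and SX: "S \<subseteq> X" and TX: "T \<subseteq> X" using Sm T unfolding mons_def by auto
      have ne: "T \<noteq> S" and mi: "Min ((T - S) \<union> (S - T)) \<in> T" using g unfolding lex_gt_def by auto
      have "Min ((T - S) \<union> (S - T)) \<in> (T - S) \<union> (S - T)" using ne fS fT by (intro Min_in) auto
      then have mi2: "Min ((T - S) \<union> (S - T)) \<in> T - S" using mi by auto
      have "card (T - S) = card (S - T)"
      proof -
        have "card (T - S) = card T - card (T \<inter> S)" using fT by (simp add: card_Diff_subset_Int)
        moreover have "card (S - T) = card S - card (S \<inter> T)" using fS by (simp add: card_Diff_subset_Int)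
        ultimately show ?thesis using cS cT by (simp add: Int_commute)
      qed
      then have v: "validp X (T - S) (S - T)" unfolding validp_def using mi2 SX TX fS fT by auto
      have "compressed (T - S) (S - T) G" using allc[of "card (T - S)"] v by blast
      then have "mv (T - S) (S - T) S \<in> G" using S unfolding compressed_def by blast
      moreover have "mv (T - S) (S - T) S = T" unfolding mv_def by auto
      ultimately show False using nT by simp
    qed
  qed
  have "G = lexseg X e (card G)" by (rule upcl_eq_lexseg[OF f upG])
  then have "lexseg X e (card F) = G" using PG P_def by auto
  then show ?thesis using PG P_def by auto
qed



interpretation vsF: vector_space "scaleF :: 'k::field \<Rightarrow> (nat set \<Rightarrow> 'k) \<Rightarrow> (nat set \<Rightarrow> 'k)"
  by (rule vector_space_scaleF)

lemma scaleF_apply[simp]: "scaleF c f S = c * f S" by (simp add: scaleF_def)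

lemma sum_fun_apply: "(sum f A) x = (\<Sum>a\<in>A. f a x)"
  by (induction A rule: infinite_finite_induct) auto

lemma mon_apply: "mon S T = (if T = S then 1 else 0)" by (simp add: mon_def)

lemma inj_mon: "inj (mon :: nat set \<Rightarrow> nat set \<Rightarrow> 'k::field)"
proof (rule injI)
  fix S T assume "(mon S :: nat set \<Rightarrow> 'k) = mon T"
  then have "(mon S :: nat set \<Rightarrow> 'k) S = mon T S" by simp
  then show "S = T" by (simp add: mon_def split: if_splits)
qed

lemma indep_mon:
  assumes fA: "finite A"
  shows "vsF.independent (mon ` A :: (nat set \<Rightarrow> 'k::field) set)"
proof
  assume "vsF.dependent (mon ` A :: (nat set \<Rightarrow> 'k) set)"
  then obtain u where u: "\<exists>v\<in>mon ` A. u v \<noteq> 0" and s: "(\<Sum>v\<in>mon ` A. scaleF (u v) v) = (0 :: nat set \<Rightarrow> 'k)"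
    using vsF.dependent_finite[of "mon ` A"] fA by blast
  obtain T where T: "T \<in> A" "u (mon T) \<noteq> 0" using u by blast
  have "(\<Sum>v\<in>mon ` A. scaleF (u v) v) = (\<Sum>S\<in>A. scaleF (u (mon S)) (mon S :: nat set \<Rightarrow> 'k))"
    using sum.reindex[OF inj_on_subset[OF inj_mon subset_UNIV], of "\<lambda>v. scaleF (u v) v" A] by (simp add: comp_def)
  then have "(\<Sum>S\<in>A. scaleF (u (mon S)) (mon S :: nat set \<Rightarrow> 'k)) T = 0" using s by simp
  moreover have "(\<Sum>S\<in>A. scaleF (u (mon S)) (mon S :: nat set \<Rightarrow> 'k)) T = (\<Sum>S\<in>A. if S = T then u (mon T) else 0)"
    unfolding sum_fun_apply by (intro sum.cong) (auto simp: mon_apply)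
  moreover have "(\<Sum>S\<in>A. if S = T then u (mon T) else 0) = u (mon T)"
    using T fA by (simp add: sum.delta')
  ultimately show False using T by simp
qed

lemma dim_span_mon:
  assumes "finite A"
  shows "dimF (spanF (mon ` A) :: (nat set \<Rightarrow> 'k::field) set) = card A"
proof -
  have "dimF (spanF (mon ` A) :: (nat set \<Rightarrow> 'k::field) set) = card (mon ` A :: (nat set \<Rightarrow> 'k) set)"
    using vsF.dim_span_eq_card_independent[OF indep_mon[OF assms]] .
  also have "\<dots> = card A" by (rule card_image) (rule inj_on_subset[OF inj_mon], simp)
  finally show ?thesis .
qed

lemma subspace_comp: "subspaceF (comp X e :: (nat set \<Rightarrow> 'k::field) set)"
  unfolding vsF.subspace_def comp_def
proof (intro conjI allI impI ballI)
  fix x y :: "nat set \<Rightarrow> 'k" and S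
  assume x: "x \<in> {f. \<forall>S. f S \<noteq> 0 \<longrightarrow> S \<in> mons X e}" and y: "y \<in> {f. \<forall>S. f S \<noteq> 0 \<longrightarrow> S \<in> mons X e}"
  show "x + y \<in> {f. \<forall>S. f S \<noteq> 0 \<longrightarrow> S \<in> mons X e}"
  proof (intro CollectI allI impI)
    fix S assume "(x + y) S \<noteq> 0"
    then have "x S \<noteq> 0 \<or> y S \<noteq> 0" by auto
    then show "S \<in> mons X e" using x y by auto
  qed
qed auto

lemma span_mon_comp:
  assumes "A \<subseteq> mons X e"
  shows "spanF (mon ` A) \<subseteq> (comp X e :: (nat set \<Rightarrow> 'k::field) set)"
proof (rule vsF.span_minimal[OF _ subspace_comp])
  show "(mon ` A :: (nat set \<Rightarrow> 'k) set) \<subseteq> comp X e"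
    using assms unfolding comp_def mon_def by (auto split: if_splits)
qed

lemma xmul_add: "xmul j (f + g) = xmul j f + xmul j g"
  by (auto simp: xmul_def)
lemma xmul_scale: "xmul j (scaleF c f) = scaleF c (xmul j f)"
  by (auto simp: xmul_def scaleF_def)
lemma xmul_zero: "xmul j 0 = 0"
  by (auto simp: xmul_def)

lemma xmul_mon: "xmul j (mon S) = (if j \<in> S then 0 else mon (insert j S))"
  by (auto simp: xmul_def mon_def)

lemma subspace_preimage_xmul:
  assumes "subspaceF (W :: (nat set \<Rightarrow> 'k::field) set)"
  shows "subspaceF {w :: nat set \<Rightarrow> 'k. xmul j w \<in> W}"
  using assms unfolding vsF.subspace_def by (auto simp: xmul_add xmul_scale xmul_zero)

lemma mult1_span_mon:
  "mult1 X (spanF (mon ` A)) = (spanF (mon ` up X A) :: (nat set \<Rightarrow> 'k::field) set)"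
proof
  show "mult1 X (spanF (mon ` A)) \<subseteq> (spanF (mon ` up X A) :: (nat set \<Rightarrow> 'k) set)"
    unfolding mult1_def
  proof (rule vsF.span_minimal[OF _ vsF.subspace_span])
    show "{xmul j w |j w. j \<in> X \<and> w \<in> spanF (mon ` A)} \<subseteq> (spanF (mon ` up X A) :: (nat set \<Rightarrow> 'k) set)"
    proof
      fix x :: "nat set \<Rightarrow> 'k" assume "x \<in> {xmul j w |j w. j \<in> X \<and> w \<in> spanF (mon ` A)}"
      then obtain j w where x: "x = xmul j w" and j: "j \<in> X" and w: "w \<in> spanF (mon ` A)" by blast
      have "w \<in> {w. xmul j w \<in> (spanF (mon ` up X A) :: (nat set \<Rightarrow> 'k) set)}"
      proof (rule subsetD[OF vsF.span_minimal[OF _ subspace_preimage_xmul[OF vsF.subspace_span]] w])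
        show "mon ` A \<subseteq> {w. xmul j w \<in> (spanF (mon ` up X A) :: (nat set \<Rightarrow> 'k) set)}"
        proof
          fix v assume "v \<in> (mon ` A :: (nat set \<Rightarrow> 'k) set)"
          then obtain S where S: "S \<in> A" "v = mon S" by blast
          show "v \<in> {w. xmul j w \<in> (spanF (mon ` up X A) :: (nat set \<Rightarrow> 'k) set)}"
          proof (cases "j \<in> S")
            case True then show ?thesis using S by (simp add: xmul_mon vsF.span_zero)
          next
            case False
            then have "insert j S \<in> up X A" using S j unfolding up_def by blast
            then show ?thesis using S False by (simp add: xmul_mon vsF.span_base)
          qed
        qed
      qed
      then show "x \<in> spanF (mon ` up X A)" using x by simp
    qed
  qed
  show "(spanF (mon ` up X A) :: (nat set \<Rightarrow> 'k) set) \<subseteq> mult1 X (spanF (mon ` A))"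
    unfolding mult1_def
  proof (rule vsF.span_minimal[OF _ vsF.subspace_span])
    show "(mon ` up X A :: (nat set \<Rightarrow> 'k) set) \<subseteq> spanF {xmul j w |j w. j \<in> X \<and> w \<in> spanF (mon ` A)}"
    proof
      fix v assume "v \<in> (mon ` up X A :: (nat set \<Rightarrow> 'k) set)"
      then obtain S j where v: "v = mon (insert j S)" and S: "S \<in> A" "j \<in> X" "j \<notin> S"
        unfolding up_def by blast
      have "v = xmul j (mon S)" using v S by (simp add: xmul_mon)
      moreover have "(mon S :: nat set \<Rightarrow> 'k) \<in> spanF (mon ` A)" using S by (simp add: vsF.span_base)
      ultimately show "v \<in> spanF {xmul j w |j w. j \<in> X \<and> w \<in> spanF (mon ` A)}"
        using S by (intro vsF.span_base) blast
    qed
  qed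
qed



definition supp :: "(nat set \<Rightarrow> 'k::field) \<Rightarrow> nat set set" where
  "supp f = {S. f S \<noteq> 0}"

definition lead :: "(nat set \<Rightarrow> 'k::field) \<Rightarrow> nat set" where
  "lead f = (SOME S. S \<in> supp f \<and> (\<forall>T\<in>supp f. T \<noteq> S \<longrightarrow> lex_gt S T))"

definition inm :: "(nat set \<Rightarrow> 'k::field) set \<Rightarrow> nat set set" where
  "inm W = {lead f | f. f \<in> W \<and> f \<noteq> 0}"

lemma supp_comp: "f \<in> comp X e \<Longrightarrow> supp f \<subseteq> mons X e"
  unfolding supp_def comp_def by auto

lemma lead_props:
  assumes f: "finite X" and fc: "f \<in> comp X e" and nz: "f \<noteq> 0"
  shows "lead f \<in> supp f" "\<forall>T\<in>supp f. T \<noteq> lead f \<longrightarrow> lex_gt (lead f) T"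
proof -
  have sm: "supp f \<subseteq> mons X e" using supp_comp[OF fc] .
  have "supp f \<noteq> {}" using nz unfolding supp_def by (auto simp: fun_eq_iff)
  moreover have "finite (supp f)" using sm finite_mons[OF f] finite_subset by blast
  moreover have "\<forall>S\<in>supp f. finite S" using sm mons_finite[OF f] by blast
  ultimately have "\<exists>S. S \<in> supp f \<and> (\<forall>T\<in>supp f. T \<noteq> S \<longrightarrow> lex_gt S T)"
    using lex_max_exists[of "supp f"] by blast
  then have "lead f \<in> supp f \<and> (\<forall>T\<in>supp f. T \<noteq> lead f \<longrightarrow> lex_gt (lead f) T)"
    unfolding lead_def by (rule someI_ex)
  then show "lead f \<in> supp f" "\<forall>T\<in>supp f. T \<noteq> lead f \<longrightarrow> lex_gt (lead f) T" by auto
qed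

lemma lead_unique:
  assumes f: "finite X" and fc: "g \<in> comp X e" and S: "S \<in> supp g"
    and mx: "\<forall>T\<in>supp g. T \<noteq> S \<longrightarrow> lex_gt S T"
  shows "lead g = S"
proof (rule ccontr)
  assume ne: "lead g \<noteq> S"
  have nz: "g \<noteq> 0" using S unfolding supp_def by auto
  have l: "lead g \<in> supp g" "\<forall>T\<in>supp g. T \<noteq> lead g \<longrightarrow> lex_gt (lead g) T"
    using lead_props[OF f fc nz] by auto
  have sm: "supp g \<subseteq> mons X e" using supp_comp[OF fc] .
  have "lex_gt S (lead g)" using mx l(1) ne by auto
  moreover have "lex_gt (lead g) S" using l S ne by auto
  moreover have "finite S" "finite (lead g)" using sm S l(1) mons_finite[OF f] by auto
  ultimately show False using lex_asym by blast
qed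

lemma lead_mons: "finite X \<Longrightarrow> f \<in> comp X e \<Longrightarrow> f \<noteq> 0 \<Longrightarrow> lead f \<in> mons X e"
  using lead_props(1) supp_comp by (metis subsetD)

lemma xmul_comp:
  assumes f: "finite X" and fc: "w \<in> comp X e" and j: "j \<in> X"
  shows "xmul j w \<in> comp X (Suc e)"
  unfolding comp_def
proof (intro CollectI allI impI)
  fix T assume "xmul j w T \<noteq> 0"
  then have jT: "j \<in> T" and "w (T - {j}) \<noteq> 0" unfolding xmul_def by (auto split: if_splits)
  then have "T - {j} \<in> mons X e" using fc unfolding comp_def by auto
  then have TX: "T - {j} \<subseteq> X" "card (T - {j}) = e"
    unfolding mons_def by auto
  then have "finite (T - {j})" using f finite_subset by blast
  note TX = TX this
  moreover have "T = insert j (T - {j})" using jT by auto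
  note TX = TX this
  from TX have "card T = Suc e" "T \<subseteq> X"
    using j by (metis card_insert_disjoint Diff_iff singletonI, metis insert_subset)
  then show "T \<in> mons X (Suc e)" unfolding mons_def by simp
qed

lemma lead_xmul:
  assumes f: "finite X" and fc: "w \<in> comp X e" and nz: "w \<noteq> 0" and j: "j \<in> X" "j \<notin> lead w"
  shows "xmul j w \<noteq> 0" "lead (xmul j w) = insert j (lead w)"
proof -
  let ?S = "lead w"
  have l: "?S \<in> supp w" "\<forall>T\<in>supp w. T \<noteq> ?S \<longrightarrow> lex_gt ?S T" using lead_props[OF f fc nz] by auto
  have sm: "supp w \<subseteq> mons X e" using supp_comp[OF fc] .
  have v: "xmul j w (insert j ?S) = w ?S" using j unfolding xmul_def by auto
  then have in1: "insert j ?S \<in> supp (xmul j w)" using l unfolding supp_def by auto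
  then show "xmul j w \<noteq> 0" unfolding supp_def by auto
  have "\<forall>T\<in>supp (xmul j w). T \<noteq> insert j ?S \<longrightarrow> lex_gt (insert j ?S) T"
  proof (intro ballI impI)
    fix T assume T: "T \<in> supp (xmul j w)" and ne: "T \<noteq> insert j ?S"
    then have jT: "j \<in> T" and R: "T - {j} \<in> supp w" unfolding supp_def xmul_def by (auto split: if_splits)
    let ?R = "T - {j}"
    have "?R \<noteq> ?S" using ne jT by auto
    then have g: "lex_gt ?S ?R" using l R by auto
    have fS: "finite ?S" using l sm mons_finite[OF f] by blast
    have fR: "finite ?R" using R sm mons_finite[OF f] by blast
    obtain m where m: "m \<in> ?S" "m \<notin> ?R" "\<forall>x<m. x \<in> ?S \<longleftrightarrow> x \<in> ?R" using g lex_gt_iff[OF fS fR] by blast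
    have "m \<noteq> j" using m j by auto
    then have "m \<in> insert j ?S" "m \<notin> T" "\<forall>x<m. x \<in> insert j ?S \<longleftrightarrow> x \<in> T" using m jT by auto
    moreover have "finite T" using fR by simp
    ultimately show "lex_gt (insert j ?S) T" using lex_gt_iff[of "insert j ?S" T] fS by blast
  qed
  then show "lead (xmul j w) = insert j ?S"
    using lead_unique[OF f xmul_comp[OF f fc j(1)] in1] by blast
qed

lemma mult1_comp:
  assumes f: "finite X" and W: "W \<subseteq> comp X e"
  shows "mult1 X W \<subseteq> (comp X (Suc e) :: (nat set \<Rightarrow> 'k::field) set)"
  unfolding mult1_def
  by (rule vsF.span_minimal[OF _ subspace_comp]) (use W xmul_comp[OF f] in blast)

lemma up_inm:
  assumes f: "finite X" and W: "W \<subseteq> comp X e"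
  shows "up X (inm W) \<subseteq> inm (mult1 X (W :: (nat set \<Rightarrow> 'k::field) set))"
proof
  fix T assume "T \<in> up X (inm W)"
  then obtain S j where T: "T = insert j S" and S: "S \<in> inm W" and j: "j \<in> X" "j \<notin> S"
    unfolding up_def by blast
  obtain w where w: "w \<in> W" "w \<noteq> 0" "S = lead w" using S unfolding inm_def by blast
  have wc: "w \<in> comp X e" using w W by auto
  have "xmul j w \<in> mult1 X W" unfolding mult1_def using w j by (intro vsF.span_base) blast
  moreover have "xmul j w \<noteq> 0" "lead (xmul j w) = T" using lead_xmul[OF f wc w(2) j(1)] j w T by auto
  ultimately show "T \<in> inm (mult1 X W)" unfolding inm_def by force
qed



lemma inm_sub: "finite X \<Longrightarrow> W \<subseteq> comp X e \<Longrightarrow> inm W \<subseteq> mons X e"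
  unfolding inm_def using lead_mons by blast

lemma finite_inm: "finite X \<Longrightarrow> W \<subseteq> comp X e \<Longrightarrow> finite (inm W)"
  by (rule finite_subset[OF inm_sub finite_mons])

lemma choose_gen:
  "\<exists>g. \<forall>S\<in>inm W. g S \<in> W \<and> g S \<noteq> 0 \<and> lead (g S) = S"
proof -
  have "\<forall>S\<in>inm W. \<exists>h. h \<in> W \<and> h \<noteq> 0 \<and> lead h = S" unfolding inm_def by blast
  then show ?thesis by (rule bchoice)
qed

lemma gen_indep:
  assumes f: "finite X" and W: "W \<subseteq> comp X e"
    and g: "\<forall>S\<in>inm W. g S \<in> W \<and> g S \<noteq> 0 \<and> lead (g S) = S"
  shows "vsF.independent (g ` inm W :: (nat set \<Rightarrow> 'k::field) set)"
proof
  let ?B = "g ` inm W"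
  have fB: "finite ?B" using finite_inm[OF f W] by simp
  assume "vsF.dependent ?B"
  then obtain u where u: "\<exists>v\<in>?B. u v \<noteq> 0" and s: "(\<Sum>v\<in>?B. scaleF (u v) v) = 0"
    using vsF.dependent_finite[OF fB] by blast
  define D where "D = {S \<in> inm W. u (g S) \<noteq> 0}"
  have Dsub: "D \<subseteq> mons X e" using inm_sub[OF f W] D_def by auto
  have "D \<noteq> {}" using u D_def by auto
  moreover have "finite D" using finite_inm[OF f W] D_def by auto
  moreover have "\<forall>S\<in>D. finite S" using Dsub mons_finite[OF f] by blast
  ultimately obtain S where S: "S \<in> D" and Smax: "\<forall>T\<in>D. T \<noteq> S \<longrightarrow> lex_gt S T"
    using lex_max_exists[of D] by blast
  have SW: "S \<in> inm W" and uS: "u (g S) \<noteq> 0" using S D_def by auto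
  have Smons: "S \<in> mons X e" using SW inm_sub[OF f W] by blast
  have Sfin: "finite S" using mons_finite[OF f Smons] .
  have zero: "u v * v S = 0" if v: "v \<in> ?B" "v \<noteq> g S" for v
  proof (rule ccontr)
    assume a: "u v * v S \<noteq> 0"
    then have uv: "u v \<noteq> 0" by simp
    from a have vS: "v S \<noteq> 0" by simp
    obtain T where T: "T \<in> inm W" "v = g T" using v(1) by blast
    have TD: "T \<in> D" using T uv unfolding D_def by simp
    have TS: "T \<noteq> S" using T(2) v(2) by blast
    have gt: "lex_gt S T" using Smax TD TS by blast
    have gT: "g T \<in> W \<and> g T \<noteq> 0 \<and> lead (g T) = T" using g T(1) by blast
    have vc: "v \<in> comp X e" using gT T(2) W by blast
    have vnz: "v \<noteq> 0" using gT T(2) by simp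
    have lv: "lead v = T" using gT T(2) by simp
    have Ssupp: "S \<in> supp v" using vS unfolding supp_def by simp
    have Sne: "S \<noteq> lead v" using lv TS by simp
    have "lex_gt (lead v) S" using lead_props(2)[OF f vc vnz] Ssupp Sne by blast
    then have gt2: "lex_gt T S" using lv by simp
    have Tmons: "T \<in> mons X e" using T(1) inm_sub[OF f W] by blast
    have Tfin: "finite T" using mons_finite[OF f Tmons] .
    show False using lex_asym[OF Sfin Tfin gt] gt2 by simp
  qed
  have "(\<Sum>v\<in>?B. scaleF (u v) v) S = (\<Sum>v\<in>?B. u v * v S)" by (simp add: sum_fun_apply)
  also have "\<dots> = (\<Sum>v\<in>?B. if v = g S then u (g S) * g S S else 0)"
  proof (rule sum.cong[OF refl])
    fix v assume "v \<in> ?B"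
    then show "u v * v S = (if v = g S then u (g S) * g S S else 0)" using zero by (cases "v = g S") auto
  qed
  also have "\<dots> = u (g S) * g S S" using SW fB by (simp add: sum.delta')
  finally have "u (g S) * g S S = 0" using s by simp
  moreover have "g S S \<noteq> 0"
  proof -
    have "g S \<in> comp X e" "g S \<noteq> 0" "lead (g S) = S" using g SW W by auto
    then have "lead (g S) \<in> supp (g S)" using lead_props(1)[OF f] by blast
    then have "S \<in> supp (g S)" using \<open>lead (g S) = S\<close> by simp
    then show ?thesis unfolding supp_def by simp
  qed
  ultimately show False using uS by simp
qed

lemma comp_span:
  assumes f: "finite X"
  shows "comp X e \<subseteq> spanF (mon ` mons X e :: (nat set \<Rightarrow> 'k::field) set)"
proof
  fix h :: "nat set \<Rightarrow> 'k" assume h: "h \<in> comp X e"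
  have "h = (\<Sum>S\<in>mons X e. scaleF (h S) (mon S))"
  proof
    fix T
    have "(\<Sum>S\<in>mons X e. scaleF (h S) (mon S)) T = (\<Sum>S\<in>mons X e. if S = T then h T else 0)"
      unfolding sum_fun_apply by (intro sum.cong) (auto simp: mon_apply)
    also have "\<dots> = h T" using h finite_mons[OF f] unfolding comp_def by (auto simp: sum.delta')
    finally show "h T = (\<Sum>S\<in>mons X e. scaleF (h S) (mon S)) T" by simp
  qed
  also have "\<dots> \<in> spanF (mon ` mons X e)"
    by (intro vsF.span_sum vsF.span_scale vsF.span_base) auto
  finally show "h \<in> spanF (mon ` mons X e)" .
qed

lemma card_indep_le_dim:
  assumes f: "finite X" and W: "W \<subseteq> comp X e" and B: "B \<subseteq> W"
    and i: "vsF.independent (B :: (nat set \<Rightarrow> 'k::field) set)"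
  shows "card B \<le> dimF W"
proof -
  obtain B' where B': "B \<subseteq> B'" "B' \<subseteq> W" "vsF.independent B'" "W \<subseteq> spanF B'"
    using vsF.maximal_independent_subset_extend[OF B i] by blast
  have "B' \<subseteq> spanF (mon ` mons X e :: (nat set \<Rightarrow> 'k) set)" using B'(2) W comp_span[OF f] by blast
  then have fB': "finite B'" using vsF.independent_span_bound[OF _ B'(3)] finite_mons[OF f] by blast
  have "card B' = dimF W" using vsF.basis_card_eq_dim[OF B'(2) B'(4) B'(3)] .
  moreover have "card B \<le> card B'" using card_mono[OF fB' B'(1)] .
  ultimately show ?thesis by simp
qed

lemma card_inm_le_dim:
  assumes f: "finite X" and W: "W \<subseteq> comp X e"
  shows "card (inm W) \<le> dimF (W :: (nat set \<Rightarrow> 'k::field) set)"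
proof -
  obtain g where g: "\<forall>S\<in>inm W. g S \<in> W \<and> g S \<noteq> 0 \<and> lead (g S) = S" using choose_gen by blast
  have inj: "inj_on g (inm W)"
  proof (rule inj_onI)
    fix S T assume ST: "S \<in> inm W" "T \<in> inm W" "g S = g T"
    have "lead (g S) = S" using bspec[OF g ST(1)] by simp
    moreover have "lead (g T) = T" using bspec[OF g ST(2)] by simp
    ultimately show "S = T" using ST(3) by metis
  qed
  have "card (inm W) = card (g ` inm W)" using card_image[OF inj] by simp
  also have "\<dots> \<le> dimF W"
  proof (rule card_indep_le_dim[OF f W _ gen_indep[OF f W g]])
    show "g ` inm W \<subseteq> W" using g by blast
  qed
  finally show ?thesis .
qed

lemma dim_le_card_inm:
  assumes f: "finite X" and W: "W \<subseteq> comp X e" and sW: "subspaceF (W :: (nat set \<Rightarrow> 'k::field) set)"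
  shows "dimF W \<le> card (inm W)"
proof -
  obtain g where g: "\<forall>S\<in>inm W. g S \<in> W \<and> g S \<noteq> 0 \<and> lead (g S) = S" using choose_gen by blast
  let ?B = "g ` inm W"
  define mu where "mu h = card {T \<in> mons X e. T = lead h \<or> lex_gt (lead h) T}" for h :: "nat set \<Rightarrow> 'k"
  have main: "\<forall>h\<in>W. mu h = k \<longrightarrow> h \<in> spanF ?B" for k
  proof (induction k rule: less_induct)
    case (less k)
    show ?case
    proof (intro ballI impI)
      fix h assume hW: "h \<in> W" and mk: "mu h = k"
      show "h \<in> spanF ?B"
      proof (cases "h = 0")
        case True then show ?thesis by (simp add: vsF.span_zero)
      next
        case False
        let ?S = "lead h"
        have hc: "h \<in> comp X e" using hW W by auto
        have Sin: "?S \<in> inm W" using hW False unfolding inm_def by blast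
        have lh: "?S \<in> supp h" "\<forall>T\<in>supp h. T \<noteq> ?S \<longrightarrow> lex_gt ?S T" using lead_props[OF f hc False] by auto
        let ?q = "g ?S"
        have qW: "?q \<in> W" and qnz: "?q \<noteq> 0" and lq: "lead ?q = ?S" using g Sin by auto
        have qc: "?q \<in> comp X e" using qW W by auto
        have lq2: "?S \<in> supp ?q" "\<forall>T\<in>supp ?q. T \<noteq> ?S \<longrightarrow> lex_gt ?S T" using lead_props[OF f qc qnz] lq by auto
        define c where "c = h ?S / ?q ?S"
        define h' where "h' = h + scaleF (- c) ?q"
        have h'W: "h' \<in> W" unfolding h'_def
          by (rule vsF.subspace_add[OF sW hW vsF.subspace_scale[OF sW qW]])
        have qS: "?q ?S \<noteq> 0" using lq2 supp_def by force
        have h'S: "h' ?S = 0" unfolding h'_def c_def using qS by simp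
        have h'below: "\<forall>T\<in>supp h'. lex_gt ?S T"
        proof
          fix T assume T: "T \<in> supp h'"
          then have "T \<noteq> ?S" using h'S supp_def by force
          moreover have "T \<in> supp h \<or> T \<in> supp ?q" using T unfolding supp_def h'_def by auto
          ultimately show "lex_gt ?S T" using lh lq2 by auto
        qed
        have hq: "h = h' + scaleF c ?q" unfolding h'_def by (auto simp: fun_eq_iff)
        have "h' \<in> spanF ?B"
        proof (cases "h' = 0")
          case True then show ?thesis by (simp add: vsF.span_zero)
        next
          case False
          have h'c: "h' \<in> comp X e" using h'W W by auto
          let ?S' = "lead h'"
          have S'in: "?S' \<in> supp h'" using lead_props(1)[OF f h'c False] .
          have gt: "lex_gt ?S ?S'" using h'below S'in by auto
          have Sm: "?S \<in> mons X e" using lh(1) supp_comp[OF hc] by auto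
          have S'm: "?S' \<in> mons X e" using S'in supp_comp[OF h'c] by auto
          have fS: "finite ?S" "finite ?S'" using Sm S'm mons_finite[OF f] by auto
          have "{T \<in> mons X e. T = ?S' \<or> lex_gt ?S' T} \<subset> {T \<in> mons X e. T = ?S \<or> lex_gt ?S T}"
          proof
            show "{T \<in> mons X e. T = ?S' \<or> lex_gt ?S' T} \<subseteq> {T \<in> mons X e. T = ?S \<or> lex_gt ?S T}"
            proof
              fix T assume T: "T \<in> {T \<in> mons X e. T = ?S' \<or> lex_gt ?S' T}"
              then have Tm: "T \<in> mons X e" and "T = ?S' \<or> lex_gt ?S' T" by auto
              then have "lex_gt ?S T" using gt lex_trans[OF fS(1) fS(2) mons_finite[OF f Tm]] by blast
              then show "T \<in> {T \<in> mons X e. T = ?S \<or> lex_gt ?S T}" using Tm by blast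
            qed
            have "?S \<notin> {T \<in> mons X e. T = ?S' \<or> lex_gt ?S' T}"
              using gt lex_asym[OF fS(1) fS(2)] lex_irrefl by auto
            then show "{T \<in> mons X e. T = ?S' \<or> lex_gt ?S' T} \<noteq> {T \<in> mons X e. T = ?S \<or> lex_gt ?S T}"
              using Sm by blast
          qed
          then have "mu h' < mu h" unfolding mu_def
            by (intro psubset_card_mono) (auto intro: finite_subset[OF _ finite_mons[OF f]])
          then show ?thesis using less.IH mk h'W by blast
        qed
        moreover have "?q \<in> spanF ?B" using Sin by (intro vsF.span_base) blast
        ultimately have "h' + scaleF c ?q \<in> spanF ?B" by (intro vsF.span_add vsF.span_scale)
        then show ?thesis using hq by metis
      qed
    qed
  qed
  have "W \<subseteq> spanF ?B" using main by blast
  then have "dimF W \<le> card ?B" using finite_inm[OF f W] by (intro vsF.dim_le_card) auto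
  also have "\<dots> \<le> card (inm W)" using finite_inm[OF f W] by (rule card_image_le)
  finally show ?thesis .
qed

theorem KK_general:
  assumes f: "finite X" and W: "W \<subseteq> comp X e" and sW: "subspaceF (W :: (nat set \<Rightarrow> 'k::field) set)"
    and k: "k \<le> dimF W"
  shows "card (up X (lexseg X e k)) \<le> dimF (mult1 X W)"
proof -
  have Fm: "inm W \<subseteq> mons X e" using inm_sub[OF f W] .
  have kF: "k \<le> card (inm W)" using k dim_le_card_inm[OF f W sW] by simp
  have "card (up X (lexseg X e k)) \<le> card (up X (lexseg X e (card (inm W))))"
    by (rule card_mono[OF finite_up[OF lexseg_sub f] up_mono[OF lexseg_mono[OF kF]]])
  also have "\<dots> \<le> card (up X (inm W))" by (rule KK[OF f Fm])
  also have "\<dots> \<le> card (inm (mult1 X W))"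
    by (rule card_mono[OF finite_inm[OF f mult1_comp[OF f W]] up_inm[OF f W]])
  also have "\<dots> \<le> dimF (mult1 X W)" by (rule card_inm_le_dim[OF f mult1_comp[OF f W]])
  finally show ?thesis .
qed



lemma up_decomp:
  assumes iX: "i \<in> X" and fX: "finite X"
    and A0: "A0 \<subseteq> mons (X - {i}) d0" and A1: "A1 \<subseteq> mons (X - {i}) d1"
  shows "up X (A0 \<union> insert i ` A1) = up (X - {i}) A0 \<union> insert i ` (A0 \<union> up (X - {i}) A1)"
proof
  let ?Q = "X - {i}"
  have A0i: "\<And>S. S \<in> A0 \<Longrightarrow> i \<notin> S" using A0 unfolding mons_def by auto
  have A1i: "\<And>S. S \<in> A1 \<Longrightarrow> i \<notin> S" using A1 unfolding mons_def by auto
  show "up X (A0 \<union> insert i ` A1) \<subseteq> up ?Q A0 \<union> insert i ` (A0 \<union> up ?Q A1)"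
  proof
    fix T assume "T \<in> up X (A0 \<union> insert i ` A1)"
    then obtain S j where T: "T = insert j S" and S: "S \<in> A0 \<union> insert i ` A1" and j: "j \<in> X" "j \<notin> S"
      unfolding up_def by blast
    show "T \<in> up ?Q A0 \<union> insert i ` (A0 \<union> up ?Q A1)"
    proof (cases "S \<in> A0")
      case True
      show ?thesis
      proof (cases "j = i")
        case True then show ?thesis using T \<open>S \<in> A0\<close> by blast
      next
        case False
        then have "T \<in> up ?Q A0" using T \<open>S \<in> A0\<close> j unfolding up_def by blast
        then show ?thesis by blast
      qed
    next
      case False
      then obtain R where R: "R \<in> A1" "S = insert i R" using S by blast
      then have ji: "j \<noteq> i" "j \<notin> R" using j by auto
      then have "insert j R \<in> up ?Q A1" using R j unfolding up_def by blast
      moreover have "T = insert i (insert j R)" using T R by auto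
      ultimately show ?thesis by blast
    qed
  qed
  show "up ?Q A0 \<union> insert i ` (A0 \<union> up ?Q A1) \<subseteq> up X (A0 \<union> insert i ` A1)"
  proof
    fix T assume T: "T \<in> up ?Q A0 \<union> insert i ` (A0 \<union> up ?Q A1)"
    show "T \<in> up X (A0 \<union> insert i ` A1)"
    proof (cases "T \<in> up ?Q A0")
      case True then show ?thesis unfolding up_def by blast
    next
      case False
      then obtain Z where Z: "Z \<in> A0 \<union> up ?Q A1" "T = insert i Z" using T by blast
      show ?thesis
      proof (cases "Z \<in> A0")
        case True then show ?thesis using Z A0i iX unfolding up_def by blast
      next
        case False
        then obtain R j where R: "Z = insert j R" "R \<in> A1" "j \<in> ?Q" "j \<notin> R" using Z unfolding up_def by blast
        have "T = insert j (insert i R)" using Z R by auto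
        moreover have "insert i R \<in> A0 \<union> insert i ` A1" using R by blast
        moreover have "j \<notin> insert i R" using R by auto
        ultimately show ?thesis using R unfolding up_def by blast
      qed
    qed
  qed
qed

lemma card_insert_image:
  assumes "finite Z" "\<And>S. S \<in> Z \<Longrightarrow> i \<notin> S"
  shows "card (insert i ` Z) = card Z"
proof (rule card_image)
  show "inj_on (insert i) Z"
  proof (rule inj_onI)
    fix S T assume "S \<in> Z" "T \<in> Z" "insert i S = insert i T"
    then show "S = T" using assms(2) by (metis insert_ident)
  qed
qed

lemma card_up_decomp:
  assumes iX: "i \<in> X" and fX: "finite X"
    and A0: "A0 \<subseteq> mons (X - {i}) d" and A1: "A1 \<subseteq> mons (X - {i}) d1"
  shows "card (up X (A0 \<union> insert i ` A1)) = card (up (X - {i}) A0) + card (A0 \<union> up (X - {i}) A1)"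
proof -
  let ?Q = "X - {i}"
  have fQ: "finite ?Q" using fX by simp
  have f1: "finite (up ?Q A0)" using finite_up[OF A0 fQ] .
  have fA0: "finite A0" using A0 finite_mons[OF fQ] finite_subset by blast
  have f2: "finite (A0 \<union> up ?Q A1)" using fA0 finite_up[OF A1 fQ] by simp
  have noi: "\<And>S. S \<in> A0 \<union> up ?Q A1 \<Longrightarrow> i \<notin> S"
    using A0 up_mons[OF A1 fQ] unfolding mons_def by blast
  have noi1: "\<And>S. S \<in> up ?Q A0 \<Longrightarrow> i \<notin> S"
    using up_mons[OF A0 fQ] unfolding mons_def by blast
  have disj: "up ?Q A0 \<inter> insert i ` (A0 \<union> up ?Q A1) = {}" using noi1 by blast
  have "card (up X (A0 \<union> insert i ` A1)) = card (up ?Q A0 \<union> insert i ` (A0 \<union> up ?Q A1))"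
    using up_decomp[OF iX fX A0 A1] by simp
  also have "\<dots> = card (up ?Q A0) + card (insert i ` (A0 \<union> up ?Q A1))"
    using card_Un_disjoint[OF f1 finite_imageI[OF f2] disj] .
  also have "\<dots> = card (up ?Q A0) + card (A0 \<union> up ?Q A1)"
    using card_insert_image[OF f2 noi] by simp
  finally show ?thesis .
qed

lemma card_split:
  assumes fX: "finite X" and A0: "A0 \<subseteq> mons (X - {i}) d" and A1: "A1 \<subseteq> mons (X - {i}) d1"
  shows "card (A0 \<union> insert i ` A1) = card A0 + card A1"
proof -
  have fQ: "finite (X - {i})" using fX by simp
  have fA0: "finite A0" using A0 finite_mons[OF fQ] finite_subset by blast
  have fA1: "finite A1" using A1 finite_mons[OF fQ] finite_subset by blast
  have noi: "\<And>S. S \<in> A1 \<Longrightarrow> i \<notin> S" using A1 unfolding mons_def by blast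
  have "A0 \<inter> insert i ` A1 = {}" using A0 unfolding mons_def by blast
  then have "card (A0 \<union> insert i ` A1) = card A0 + card (insert i ` A1)"
    using card_Un_disjoint[OF fA0 finite_imageI[OF fA1]] by simp
  then show ?thesis using card_insert_image[OF fA1 noi] by simp
qed

lemma dim_mult1_mon:
  assumes fX: "finite X" and A: "A \<subseteq> mons X e"
  shows "dimF (mult1 X (spanF (mon ` A)) :: (nat set \<Rightarrow> 'k::field) set) = card (up X A)"
  unfolding mult1_span_mon using dim_span_mon[OF finite_up[OF A fX]] by simp

theorem lemma4p6:
  fixes n d i :: nat and M :: "nat set set"
  assumes "i \<in> {1..n}"
    and "M \<subseteq> mons {1..n} d"
    and "gotzmann {1..n} d (spanF (mon ` M) :: (nat set \<Rightarrow> 'k::field) set)"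
  defines "M0 \<equiv> {S \<in> M. i \<notin> S}"
    and "M1 \<equiv> {S - {i} | S. S \<in> M \<and> i \<in> S}"
  shows "gotzmann ({1..n} - {i}) (d - 1) (spanF (mon ` M1) :: (nat set \<Rightarrow> 'k) set)
         \<or> mult1 ({1..n} - {i}) (spanF (mon ` lexseg ({1..n} - {i}) (d - 1) (card M1)))
             \<subseteq> (spanF (mon ` lexseg ({1..n} - {i}) d (card M0)) :: (nat set \<Rightarrow> 'k) set)"
proof -
  define X where "X = {1..n}"
  define Q where "Q = X - {i}"
  have iX: "i \<in> X" using assms(1) X_def by simp
  have fX: "finite X" and fQ: "finite Q" using X_def Q_def by auto
  have MX: "M \<subseteq> mons X d" using assms(2) X_def by simp
  define L0 where "L0 = lexseg Q d (card M0)"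
  define L1 where "L1 = lexseg Q (d - 1) (card M1)"
  have sec: "mult1 Q (spanF (mon ` L1)) \<subseteq> (spanF (mon ` L0) :: (nat set \<Rightarrow> 'k) set)" if "up Q L1 \<subseteq> L0"
    unfolding mult1_span_mon by (rule vsF.span_mono) (use that in blast)
  have M0Q: "M0 \<subseteq> mons Q d" using MX unfolding M0_def Q_def mons_def by auto
  have M1Q: "M1 \<subseteq> mons Q (d - 1)"
  proof
    fix R assume "R \<in> M1"
    then obtain S where S: "R = S - {i}" "S \<in> M" "i \<in> S" unfolding M1_def by blast
    then have "S \<subseteq> X" "card S = d" using MX unfolding mons_def by auto
    moreover have "finite S" using \<open>S \<subseteq> X\<close> fX finite_subset by blast
    ultimately show "R \<in> mons Q (d - 1)" using S unfolding mons_def Q_def by auto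
  qed
  show ?thesis
  proof (cases "up Q L1 \<subseteq> L0")
    case True
    then show ?thesis using sec unfolding Q_def X_def L0_def L1_def by blast
  next
    case notsub: False
    have d1: "d \<noteq> 0"
    proof
      assume "d = 0"
      have "M1 = {}"
      proof (rule ccontr)
        assume "M1 \<noteq> {}"
        then obtain S where S: "S \<in> M" "i \<in> S" unfolding M1_def by blast
        then have "S \<subseteq> X" "card S = 0" using MX \<open>d = 0\<close> unfolding mons_def by auto
        moreover have "finite S" using \<open>S \<subseteq> X\<close> fX finite_subset by blast
        ultimately have "S = {}" by simp
        then show False using S by simp
      qed
      then have "L1 = {}" unfolding L1_def lexseg_def by simp
      then show False using notsub unfolding up_def by simp
    qed
    have Msplit: "M = M0 \<union> insert i ` M1"
    proof
      show "M \<subseteq> M0 \<union> insert i ` M1"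
      proof
        fix S assume S: "S \<in> M"
        show "S \<in> M0 \<union> insert i ` M1"
        proof (cases "i \<in> S")
          case True
          then have "S - {i} \<in> M1" using S unfolding M1_def by blast
          moreover have "S = insert i (S - {i})" using True by auto
          ultimately show ?thesis by blast
        next
          case False then show ?thesis using S unfolding M0_def by blast
        qed
      qed
      show "M0 \<union> insert i ` M1 \<subseteq> M"
      proof
        fix S assume "S \<in> M0 \<union> insert i ` M1"
        then show "S \<in> M"
        proof
          assume "S \<in> M0" then show ?thesis unfolding M0_def by blast
        next
          assume "S \<in> insert i ` M1"
          then obtain R where "R \<in> M1" "S = insert i R" by blast
          then obtain S' where "R = S' - {i}" "S' \<in> M" "i \<in> S'" unfolding M1_def by blast
          then have "S = S'" using \<open>S = insert i R\<close> by auto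
          then show ?thesis using \<open>S' \<in> M\<close> by simp
        qed
      qed
    qed
    have cL0: "card L0 = card M0"
      unfolding L0_def by (rule card_lexseg[OF fQ card_mono[OF finite_mons[OF fQ] M0Q]])
    have cL1: "card L1 = card M1"
      unfolding L1_def by (rule card_lexseg[OF fQ card_mono[OF finite_mons[OF fQ] M1Q]])
    have L0Q: "L0 \<subseteq> mons Q d" unfolding L0_def by (rule lexseg_sub)
    have L1Q: "L1 \<subseteq> mons Q (d - 1)" unfolding L1_def by (rule lexseg_sub)
    define N where "N = L0 \<union> insert i ` L1"
    have NX: "N \<subseteq> mons X d"
    proof
      fix T assume "T \<in> N"
      then show "T \<in> mons X d"
      proof (unfold N_def, elim UnE)
        assume "T \<in> L0" then show ?thesis using L0Q unfolding mons_def Q_def by auto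
      next
        assume "T \<in> insert i ` L1"
        then obtain R where R: "R \<in> L1" "T = insert i R" by blast
        then have "R \<subseteq> Q" "card R = d - 1" using L1Q unfolding mons_def by auto
        moreover have "finite R" using \<open>R \<subseteq> Q\<close> fQ finite_subset by blast
        moreover have "i \<notin> R" using \<open>R \<subseteq> Q\<close> unfolding Q_def by blast
        ultimately have "card (insert i R) = d" using d1 by simp
        then show ?thesis using R \<open>R \<subseteq> Q\<close> iX unfolding mons_def Q_def by auto
      qed
    qed
    have cM: "card M = card M0 + card M1" using Msplit card_split[OF fX M0Q[unfolded Q_def] M1Q[unfolded Q_def]] by simp
    have cN: "card N = card M" unfolding N_def
      using card_split[OF fX L0Q[unfolded Q_def] L1Q[unfolded Q_def]] cL0 cL1 cM by simp
    have fM: "finite M" using MX finite_mons[OF fX] finite_subset by blast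
    have fN: "finite N" using NX finite_mons[OF fX] finite_subset by blast
    have gz: "gotzmann X d (spanF (mon ` M) :: (nat set \<Rightarrow> 'k) set)" using assms(3) X_def by simp
    have "dimF (mult1 X (spanF (mon ` M)) :: (nat set \<Rightarrow> 'k) set) \<le> dimF (mult1 X (spanF (mon ` N)) :: (nat set \<Rightarrow> 'k) set)"
    proof -
      have "subspaceF (spanF (mon ` N) :: (nat set \<Rightarrow> 'k) set)" by (rule vsF.subspace_span)
      moreover have "(spanF (mon ` N) :: (nat set \<Rightarrow> 'k) set) \<subseteq> comp X d" by (rule span_mon_comp[OF NX])
      moreover have "dimF (spanF (mon ` N) :: (nat set \<Rightarrow> 'k) set) = dimF (spanF (mon ` M) :: (nat set \<Rightarrow> 'k) set)"
        using dim_span_mon[OF fN, where 'k='k] dim_span_mon[OF fM, where 'k='k] cN by simp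
      ultimately show ?thesis using gz unfolding gotzmann_def by blast
    qed
    then have ineq: "card (up X M) \<le> card (up X N)"
      using dim_mult1_mon[OF fX MX, where 'k='k] dim_mult1_mon[OF fX NX, where 'k='k] by simp
    have eM: "card (up X M) = card (up Q M0) + card (M0 \<union> up Q M1)"
      using card_up_decomp[OF iX fX M0Q[unfolded Q_def] M1Q[unfolded Q_def]] Msplit unfolding Q_def by simp
    have eN: "card (up X N) = card (up Q L0) + card (L0 \<union> up Q L1)"
      using card_up_decomp[OF iX fX L0Q[unfolded Q_def] L1Q[unfolded Q_def]] unfolding N_def Q_def by simp
    have kk0: "card (up Q L0) \<le> card (up Q M0)" unfolding L0_def by (rule KK[OF fQ M0Q])
    have up1: "upcl Q d (up Q L1)"
      using up_upcl[OF fQ lexseg_upcl[OF fQ, of "d - 1" "card M1"]] d1 unfolding L1_def by simp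
    have up0: "upcl Q d L0" unfolding L0_def by (rule lexseg_upcl[OF fQ])
    have "L0 \<subseteq> up Q L1" using upcl_comparable[OF fQ up0 up1] notsub by blast
    then have "L0 \<union> up Q L1 = up Q L1" by blast
    then have "card (M0 \<union> up Q M1) \<le> card (up Q L1)" using ineq eM eN kk0 by simp
    moreover have "card (up Q M1) \<le> card (M0 \<union> up Q M1)"
      using finite_up[OF M1Q fQ] finite_subset[OF M0Q finite_mons[OF fQ]] by (intro card_mono) auto
    ultimately have key: "card (up Q M1) \<le> card (up Q L1)" by simp
    have fM1: "finite M1" using M1Q finite_mons[OF fQ] finite_subset by blast
    have "gotzmann Q (d - 1) (spanF (mon ` M1) :: (nat set \<Rightarrow> 'k) set)"
      unfolding gotzmann_def
    proof (intro conjI allI impI)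
      show "subspaceF (spanF (mon ` M1) :: (nat set \<Rightarrow> 'k) set)" by (rule vsF.subspace_span)
      show "(spanF (mon ` M1) :: (nat set \<Rightarrow> 'k) set) \<subseteq> comp Q (d - 1)" by (rule span_mon_comp[OF M1Q])
      fix W :: "(nat set \<Rightarrow> 'k) set"
      assume W: "subspaceF W \<and> W \<subseteq> comp Q (d - 1) \<and> dimF W = dimF (spanF (mon ` M1) :: (nat set \<Rightarrow> 'k) set)"
      have dW: "card M1 \<le> dimF W" using W dim_span_mon[OF fM1, where 'k='k] by simp
      have "dimF (mult1 Q (spanF (mon ` M1)) :: (nat set \<Rightarrow> 'k) set) = card (up Q M1)"
        by (rule dim_mult1_mon[OF fQ M1Q])
      also have "\<dots> \<le> card (up Q L1)" by (rule key)
      also have "\<dots> \<le> dimF (mult1 Q W)" unfolding L1_def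
        using KK_general[OF fQ _ _ dW] W by blast
      finally show "dimF (mult1 Q (spanF (mon ` M1)) :: (nat set \<Rightarrow> 'k) set) \<le> dimF (mult1 Q W)" .
    qed
    then show ?thesis unfolding Q_def X_def by blast
  qed
qed

end
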